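(* Let $f(x)=x^5+px^4+qx^3+rx^2+sx+t$ with real coefficients, and suppose $D=0$ and $L_1<0$ (so that $f$ has one real double root, one real simple root and two non-real complex conjugate roots). Then the double root of $f$ is $d=C_0/L_1$, and with $F_2=r+3qd+6pd^2+10d^3$: if $F_2>0$ then the real simple root is smaller than the double root, and if $F_2<0$ then the real simple root is larger than the double root.
   Context: Let $\alpha_1,\dots,\alpha_5\in\mathbb{C}$ be the roots of $f$ listed with multiplicity. $D=\prod_{1\le i<j\le 5}(\alpha_i-\alpha_j)^2$ is the discriminant of $f$. $L_1=-264ps^2r-12p^3tq^2+36r^3pq-124srpq^2+28srp^3q+260sptq-132p^2qrt+240pr^2t+234sqr^2+32p^4tr+48ptq^3-56sp^3t-80q^2rt+194qs^2p^2-600str-6q^3sp^2+2p^2q^2r^2-12sr^2p^2-54r^4+320s^3-8q^3r^2-8r^3p^3+250qt^2-176q^2s^2+24q^4s-36p^4s^2-100p^2t^2$. $C_0=48sp^4t+4sp^3r^2+80p^3t^2-32p^3rqt-3p^3s^2q+7s^2p^2r-p^2srq^2-4p^2r^2t+9p^2tq^3-266sqp^2t+16ps^3+146ptrq^2-18spr^2q+290sptr-275pqt^2+12ps^2q^2+4sq^3r-195r^2qt+260sq^2t+27sr^3+375t^2r-36q^4t-48rs^2q-400ts^2$. *)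

theory Defs
  imports "HOL-Computational_Algebra.Polynomial"
begin

definition quintic :: "real \<Rightarrow> real \<Rightarrow> real \<Rightarrow> real \<Rightarrow> real \<Rightarrow> real poly" where
  "quintic p q r s t = [:t, s, r, q, p, 1:]"

text \<open>Discriminant as product of squared root differences, with the complex roots
  alpha_0..alpha_4 of f listed with multiplicity (any such listing).\<close>
definition disc5 :: "real poly \<Rightarrow> complex" where
  "disc5 f = (let \<alpha> = (SOME \<alpha> :: nat \<Rightarrow> complex.
       map_poly complex_of_real f = (\<Prod>i<5. [:- \<alpha> i, 1:]))
     in \<Prod>i<5. \<Prod>j\<in>{i<..<5}. (\<alpha> i - \<alpha> j)^2)"

definition L1 :: "real \<Rightarrow> real \<Rightarrow> real \<Rightarrow> real \<Rightarrow> real \<Rightarrow> real" where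
  "L1 p q r s t = -264*p*s^2*r-12*p^3*t*q^2+36*r^3*p*q-124*s*r*p*q^2+28*s*r*p^3*q+260*s*p*t*q
    -132*p^2*q*r*t+240*p*r^2*t+234*s*q*r^2+32*p^4*t*r+48*p*t*q^3-56*s*p^3*t-80*q^2*r*t
    +194*q*s^2*p^2-600*s*t*r-6*q^3*s*p^2+2*p^2*q^2*r^2-12*s*r^2*p^2-54*r^4+320*s^3
    -8*q^3*r^2-8*r^3*p^3+250*q*t^2-176*q^2*s^2+24*q^4*s-36*p^4*s^2-100*p^2*t^2"

definition C0 :: "real \<Rightarrow> real \<Rightarrow> real \<Rightarrow> real \<Rightarrow> real \<Rightarrow> real" where
  "C0 p q r s t = 48*s*p^4*t+4*s*p^3*r^2+80*p^3*t^2-32*p^3*r*q*t-3*p^3*s^2*q+7*s^2*p^2*r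
    -p^2*s*r*q^2-4*p^2*r^2*t+9*p^2*t*q^3-266*s*q*p^2*t+16*p*s^3+146*p*t*r*q^2-18*s*p*r^2*q
    +290*s*p*t*r-275*p*q*t^2+12*p*s^2*q^2+4*s*q^3*r-195*r^2*q*t+260*s*q^2*t+27*s*r^3
    +375*t^2*r-36*q^4*t-48*r*s^2*q-400*t*s^2"

end

theory Submission imports Defs "HOL-Computational_Algebra.Fundamental_Theorem_Algebra" begin
definition L1g :: "'a::comm_ring_1 \<Rightarrow> 'a \<Rightarrow> 'a \<Rightarrow> 'a \<Rightarrow> 'a \<Rightarrow> 'a" where
  "L1g p q r s t = -264*p*s^2*r-12*p^3*t*q^2+36*r^3*p*q-124*s*r*p*q^2+28*s*r*p^3*q+260*s*p*t*q
    -132*p^2*q*r*t+240*p*r^2*t+234*s*q*r^2+32*p^4*t*r+48*p*t*q^3-56*s*p^3*t-80*q^2*r*t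
    +194*q*s^2*p^2-600*s*t*r-6*q^3*s*p^2+2*p^2*q^2*r^2-12*s*r^2*p^2-54*r^4+320*s^3
    -8*q^3*r^2-8*r^3*p^3+250*q*t^2-176*q^2*s^2+24*q^4*s-36*p^4*s^2-100*p^2*t^2"
definition C0g :: "'a::comm_ring_1 \<Rightarrow> 'a \<Rightarrow> 'a \<Rightarrow> 'a \<Rightarrow> 'a \<Rightarrow> 'a" where
  "C0g p q r s t = 48*s*p^4*t+4*s*p^3*r^2+80*p^3*t^2-32*p^3*r*q*t-3*p^3*s^2*q+7*s^2*p^2*r
    -p^2*s*r*q^2-4*p^2*r^2*t+9*p^2*t*q^3-266*s*q*p^2*t+16*p*s^3+146*p*t*r*q^2-18*s*p*r^2*q
    +290*s*p*t*r-275*p*q*t^2+12*p*s^2*q^2+4*s*q^3*r-195*r^2*q*t+260*s*q^2*t+27*s*r^3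
    +375*t^2*r-36*q^4*t-48*r*s^2*q-400*t*s^2"
lemma L1_ident:
  fixes z u v w :: "'a::field_char_0"
  shows "L1g (u-2*z) (v-2*z*u+z^2) (w-2*z*v+z^2*u) (-2*z*w+z^2*v) (z^2*w) = 2*(z^3+u*z^2+v*z+w)^2*(u^2*v^2-4*v^3-4*u^3*w-27*w^2+18*u*v*w)"
  unfolding L1g_def by algebra
lemma C0_ident:
  fixes z u v w :: "'a::field_char_0"
  shows "C0g (u-2*z) (v-2*z*u+z^2) (w-2*z*v+z^2*u) (-2*z*w+z^2*v) (z^2*w) = z * L1g (u-2*z) (v-2*z*u+z^2) (w-2*z*v+z^2*u) (-2*z*w+z^2*v) (z^2*w)"
  unfolding L1g_def C0g_def by algebra

lemma L1_real: "L1 p q r s t = L1g p q r s t"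
  by (simp add: L1_def L1g_def)
lemma C0_real: "C0 p q r s t = C0g p q r s t"
  by (simp add: C0_def C0g_def)
lemma L1_of_real: "complex_of_real (L1 p q r s t) = L1g (of_real p) (of_real q) (of_real r) (of_real s) (of_real t)"
  by (simp add: L1_def L1g_def)
lemma C0_of_real: "complex_of_real (C0 p q r s t) = C0g (of_real p) (of_real q) (of_real r) (of_real s) (of_real t)"
  by (simp add: C0_def C0g_def)

lemma double_root_exists:
  fixes p q r s t :: real
  assumes "disc5 (quintic p q r s t) = 0"
  shows "\<exists>z h. map_poly complex_of_real (quintic p q r s t) = [:-z,1:]^2 * h"
proof -
  define F where "F = map_poly complex_of_real (quintic p q r s t)"
  have hF: "F = [:of_real t, of_real s, of_real r, of_real q, of_real p, 1:]"
    by (simp add: F_def quintic_def map_poly_pCons)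
  have deg: "degree F = 5" and lc: "lead_coeff F = 1" by (simp_all add: hF)
  obtain root where "smult (lead_coeff F) (\<Prod>i<degree F. [:-root i, 1:]) = F"
    using complex_poly_decompose' by blast
  hence ex: "\<exists>\<alpha>::nat\<Rightarrow>complex. F = (\<Prod>i<5. [:- \<alpha> i, 1:])"
    using deg lc by (metis smult_1_left)
  define \<alpha> where "\<alpha> = (SOME \<alpha> :: nat \<Rightarrow> complex. F = (\<Prod>i<5. [:- \<alpha> i, 1:]))"
  have h\<alpha>: "F = (\<Prod>i<5. [:- \<alpha> i, 1:])"
    unfolding \<alpha>_def by (rule someI_ex[OF ex])
  have "(\<Prod>i<5. \<Prod>j\<in>{i<..<5}. (\<alpha> i - \<alpha> j)^2) = 0"
    using assms unfolding disc5_def F_def[symmetric] \<alpha>_def[symmetric] by (simp add: Let_def)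
  then obtain i j where ij: "i < 5" "j \<in> {i<..<5}" "\<alpha> i = \<alpha> j"
    by (auto simp: prod_zero_iff)
  have "F = [:- \<alpha> i, 1:] * (\<Prod>k\<in>{..<5}-{i}. [:- \<alpha> k, 1:])"
    using h\<alpha> ij by (simp add: prod.remove)
  also have "(\<Prod>k\<in>{..<5}-{i}. [:- \<alpha> k, 1:]) = [:- \<alpha> j, 1:] * (\<Prod>k\<in>{..<5}-{i}-{j}. [:- \<alpha> k, 1:])"
    using ij by (intro prod.remove) auto
  finally have "F = [:- \<alpha> i, 1:]^2 * (\<Prod>k\<in>{..<5}-{i}-{j}. [:- \<alpha> k, 1:])"
    using ij(3) by (metis power2_eq_square mult.assoc)
  thus ?thesis unfolding F_def by blast
qed


lemma quintic_complex_eqs: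
  fixes p q r s t :: real
  assumes "map_poly complex_of_real (quintic p q r s t) = [:-z,1:]^2 * h"
  shows "z^5 + of_real p*z^4 + of_real q*z^3 + of_real r*z^2 + of_real s*z + of_real t = 0"
    and "5*z^4 + 4*of_real p*z^3 + 3*of_real q*z^2 + 2*of_real r*z + of_real s = 0"
proof -
  define F where "F = map_poly complex_of_real (quintic p q r s t)"
  have hF: "F = [:of_real t, of_real s, of_real r, of_real q, of_real p, 1:]"
    by (simp add: F_def quintic_def map_poly_pCons)
  have "poly F z = 0" using assms by (simp add: F_def)
  thus "z^5 + of_real p*z^4 + of_real q*z^3 + of_real r*z^2 + of_real s*z + of_real t = 0"
    by (simp add: hF eval_nat_numeral algebra_simps)
  have "poly (pderiv ([:-z,1:]*[:-z,1:]*h)) z = 0" unfolding pderiv_mult poly_add poly_mult by simp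
  hence "poly (pderiv F) z = 0" using assms by (simp add: F_def power2_eq_square)
  thus "5*z^4 + 4*of_real p*z^3 + 3*of_real q*z^2 + 2*of_real r*z + of_real s = 0"
    by (simp add: hF pderiv_pCons eval_nat_numeral algebra_simps)
qed


theorem mainTheorem9:
  fixes p q r s t :: real
  assumes "disc5 (quintic p q r s t) = 0"
    and "L1 p q r s t < 0"
  shows "let f = quintic p q r s t; d = C0 p q r s t / L1 p q r s t;
             F2 = r + 3*q*d + 6*p*d^2 + 10*d^3 in
           order d f = 2 \<and>
           (\<forall>e. poly f e = 0 \<and> e \<noteq> d \<longrightarrow>
              (F2 > 0 \<longrightarrow> e < d) \<and> (F2 < 0 \<longrightarrow> e > d))"
proof -
  define d where "d = C0 p q r s t / L1 p q r s t"
  define f where "f = quintic p q r s t"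
  have L0: "L1 p q r s t \<noteq> 0" using assms(2) by simp
  obtain z h where zh: "map_poly complex_of_real (quintic p q r s t) = [:-z,1:]^2 * h"
    using double_root_exists[OF assms(1)] by blast
  note E = quintic_complex_eqs[OF zh]
  define P where "P = complex_of_real p"
  define Q where "Q = complex_of_real q"
  define R where "R = complex_of_real r"
  define S where "S = complex_of_real s"
  define T where "T = complex_of_real t"
  define u where "u = P + 2*z"
  define v where "v = Q + 2*z*u - z^2"
  define w where "w = R + 2*z*v - z^2*u"
  have hP: "P = u - 2*z" and hQ: "Q = v-2*z*u+z^2" and hR: "R = w-2*z*v+z^2*u"
    by (simp_all add: u_def v_def w_def)
  have E1: "z^5 + P*z^4 + Q*z^3 + R*z^2 + S*z + T = 0" using E(1) by (simp add: P_def Q_def R_def S_def T_def)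
  have E2: "5*z^4 + 4*P*z^3 + 3*Q*z^2 + 2*R*z + S = 0" using E(2) by (simp add: P_def Q_def R_def S_def)
  have hS: "S = -2*z*w+z^2*v" using E2 unfolding u_def v_def w_def by algebra
  have hT: "T = z^2*w" using E1 E2 unfolding u_def v_def w_def by algebra
  have "complex_of_real (C0 p q r s t) = z * complex_of_real (L1 p q r s t)"
    unfolding C0_of_real L1_of_real P_def[symmetric] Q_def[symmetric] R_def[symmetric]
      S_def[symmetric] T_def[symmetric] hP hQ hR hS hT by (rule C0_ident)
  hence zd: "z = complex_of_real d" using L0 by (simp add: d_def field_simps)
  have e1: "complex_of_real (d^5 + p*d^4 + q*d^3 + r*d^2 + s*d + t) = 0" using E(1) zd by simp
  have e2: "complex_of_real (5*d^4 + 4*p*d^3 + 3*q*d^2 + 2*r*d + s) = 0" using E(2) zd by simp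
  have e1: "d^5 + p*d^4 + q*d^3 + r*d^2 + s*d + t = 0" using e1 by (simp only: of_real_eq_0_iff)
  have e2: "5*d^4 + 4*p*d^3 + 3*q*d^2 + 2*r*d + s = 0" using e2 by (simp only: of_real_eq_0_iff)
  define ur where "ur = p + 2*d"
  define vr where "vr = q + 2*d*ur - d^2"
  define wr where "wr = r + 2*d*vr - d^2*ur"
  have rP: "p = ur - 2*d" and rQ: "q = vr-2*d*ur+d^2" and rR: "r = wr-2*d*vr+d^2*ur"
    by (simp_all add: ur_def vr_def wr_def)
  have rS: "s = -2*d*wr+d^2*vr" using e2 unfolding ur_def vr_def wr_def by algebra
  have rT: "t = d^2*wr" using e1 e2 unfolding ur_def vr_def wr_def by algebra
  define gd where "gd = d^3+ur*d^2+vr*d+wr"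
  define disc where "disc = ur^2*vr^2-4*vr^3-4*ur^3*wr-27*wr^2+18*ur*vr*wr"
  have Lid: "L1 p q r s t = 2*gd^2*disc"
    unfolding L1_real gd_def disc_def rP rQ rR rS rT by (rule L1_ident)
  have gd0: "gd \<noteq> 0" using L0 Lid by auto
  have disc_neg: "disc < 0"
  proof -
    have "0 < gd^2" using gd0 by simp
    thus ?thesis using assms(2) Lid by (simp add: mult_less_0_iff)
  qed
  define G where "G = [:wr, vr, ur, 1:]"
  have fG: "f = [:-d,1:]^2 * G"
    unfolding f_def quintic_def G_def rP rQ rR rS rT
    by (simp add: power2_eq_square algebra_simps)
  have Gd: "poly G d = gd" by (simp add: G_def gd_def algebra_simps eval_nat_numeral)
  have G0: "G \<noteq> 0" by (simp add: G_def)
  have ord: "order d f = 2"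
  proof -
    have "order d G = 0" using Gd gd0 G0 by (metis order_root)
    thus ?thesis using G0 by (simp add: fG order_mult order_power_n_n)
  qed
  have F2: "r + 3*q*d + 6*p*d^2 + 10*d^3 = gd"
    unfolding gd_def rP rQ rR by algebra
  have roots: "(gd > 0 \<longrightarrow> e < d) \<and> (gd < 0 \<longrightarrow> e > d)" if "poly f e = 0" "e \<noteq> d" for e
  proof -
    have "poly G e = 0" using that by (simp add: fG)
    hence ge: "e^3 + ur*e^2 + vr*e + wr = 0" by (simp add: G_def algebra_simps eval_nat_numeral)
    define a where "a = ur + e"
    define b where "b = vr + e*a"
    have hu: "ur = a - e" and hv: "vr = b - e*a" by (simp_all add: a_def b_def)
    have hw: "wr = -e*b" using ge unfolding a_def b_def by algebra
    have "disc = (a^2-4*b)*(e^2+a*e+b)^2" unfolding disc_def hu hv hw by algebra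
    hence "a^2 - 4*b < 0" using disc_neg by (smt (verit) mult_nonneg_nonneg zero_le_power2)
    moreover have "(2*d+a)^2 \<ge> 0" by simp
    ultimately have "0 < (2*d+a)^2 + (4*b - a^2)" by linarith
    also have "(2*d+a)^2 + (4*b - a^2) = 4*(d^2+a*d+b)" by algebra
    finally have pos: "d^2+a*d+b > 0" by simp
    have "gd = (d-e)*(d^2+a*d+b)" unfolding gd_def hu hv hw by algebra
    thus ?thesis using pos by (auto simp: zero_less_mult_iff mult_less_0_iff)
  qed
  show ?thesis unfolding Let_def f_def[symmetric] d_def[symmetric] F2
    using ord roots by blast
qed

end
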